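(* For an arbitrary channel $W:\mathcal{X}\to\mathcal{Y}$ with $\mathcal{Y}$ finite, any block length $n$, any $0<\delta\le\sqrt{n}\log|\mathcal{Y}|$ and any $x^n\in\mathcal{X}^n$, \[ W_{x^n}(\mathcal{T}^\delta_{x^n})\ge1-2\exp\!\left(-\delta^2/36K(|\mathcal{Y}|)\right). \]
   Context: A channel $W:\mathcal{X}\to\mathcal{Y}$ ($\mathcal{X}$ measurable space) is a measurable map $x\mapsto W_x\in\mathcal{P}(\mathcal{Y})$; $W_{x^n}(y^n)=\prod_{i=1}^nW_{x_i}(y_i)$. Logarithms and exponentials are base 2; $H$ is Shannon entropy. The conditional typical set is $\mathcal{T}^\delta_{x^n}=\{y^n\in\mathcal{Y}^n:|\log W_{x^n}(y^n)+H(W_{x^n})|\le\delta\sqrt{n}\}$, and $K(d)=(\log\max\{d,3\})^2$. *)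

theory Defs
  imports "HOL-Probability.Probability"
begin

definition prod_chan :: "('x \<Rightarrow> 'y pmf) \<Rightarrow> 'x list \<Rightarrow> 'y list \<Rightarrow> real" where
  "prod_chan W xs ys = (\<Prod>i<length xs. pmf (W (xs ! i)) (ys ! i))"

definition shannon_H :: "'a set \<Rightarrow> ('a \<Rightarrow> real) \<Rightarrow> real" where
  "shannon_H S p = - (\<Sum>y\<in>S. if p y = 0 then 0 else p y * log 2 (p y))"

definition blocks :: "nat \<Rightarrow> 'y list set" where
  "blocks n = {ys. length ys = n}"

definition H_chan :: "('x \<Rightarrow> 'y pmf) \<Rightarrow> 'x list \<Rightarrow> real" where
  "H_chan W xs = shannon_H (blocks (length xs)) (prod_chan W xs)"

text \<open>Conditional typical set; sequences of probability 0 (log = -infinity) are excluded.\<close>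
definition typical_set :: "('x \<Rightarrow> 'y pmf) \<Rightarrow> 'x list \<Rightarrow> real \<Rightarrow> 'y list set" where
  "typical_set W xs \<delta> = {ys \<in> blocks (length xs). prod_chan W xs ys > 0 \<and>
      \<bar>log 2 (prod_chan W xs ys) + H_chan W xs\<bar> \<le> \<delta> * sqrt (real (length xs))}"

definition Kfun :: "nat \<Rightarrow> real" where
  "Kfun d = (log 2 (real (max d 3)))^2"

end

theory Submission
  imports Defs
begin


lemma exp_quad_bound:
  fixes v B :: real assumes "0 \<le> B" "v \<le> B"
  shows "exp v \<le> 1 + v + v^2 / 2 * exp B"
proof (cases "v < 0")
  case True
  obtain t where t: "exp v = (\<Sum>m<3. (v ^ m) / fact m) + (exp t / fact 3) * v ^ 3"
    using Maclaurin_exp_le[of v 3] by blast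
  have "v^3 < 0" using True by (simp add: power_less_zero_eq)
  hence "exp t * v ^ 3 \<le> 0" by (intro mult_nonneg_nonpos) auto
  hence "(exp t / fact 3) * v ^ 3 \<le> 0" by (simp add: divide_nonpos_pos)
  hence "exp v \<le> 1 + v + v^2/2" using t by (simp add: numeral_3_eq_3 power2_eq_square)
  moreover have "v^2/2 \<le> v^2/2 * exp B"
    using assms mult_left_mono[of 1 "exp B" "v^2/2"] by simp
  ultimately show ?thesis by simp
next
  case False
  obtain t where t: "\<bar>t\<bar> \<le> \<bar>v\<bar>" "exp v = (\<Sum>m<2. (v ^ m) / fact m) + (exp t / fact 2) * v ^ 2"
    using Maclaurin_exp_le[of v 2] by blast
  have "exp t \<le> exp B" using t(1) False assms by simp
  hence "exp t * v^2 \<le> exp B * v^2" by (intro mult_right_mono) auto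
  hence "(exp t / fact 2) * v ^ 2 \<le> v^2/2 * exp B" by (simp add: mult.commute)
  thus ?thesis using t(2) by (simp add: numeral_2_eq_2)
qed

lemma exp_ge_e_times: "exp 1 * y \<le> exp (y::real)"
proof -
  have "y \<le> exp (y - 1)" using exp_ge_add_one_self[of "y-1"] by simp
  hence "exp 1 * y \<le> exp 1 * exp (y - 1)" by simp
  also have "\<dots> = exp y" by (simp add: exp_diff)
  finally show ?thesis .
qed

lemma sq_exp_bound:
  fixes l c :: real assumes "c > 0" "l \<ge> 0"
  shows "l^2 * exp (- c * l) \<le> 4 / ((5/2)^2 * c^2)"
proof -
  have e: "exp 1 \<ge> (5/2::real)" using exp_lower_Taylor_quadratic[of 1] by simp
  have "(5/2) * (c*l/2) \<le> exp (c*l/2)"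
    using exp_ge_e_times[of "c*l/2"] e assms
    by (smt (verit, ccfv_SIG) mult_right_mono zero_le_divide_iff zero_le_mult_iff)
  hence "((5/2) * (c*l/2))^2 \<le> (exp (c*l/2))^2"
    using assms by (intro power_mono) auto
  also have "(exp (c*l/2))^2 = exp (c*l)" by (simp add: power2_eq_square flip: exp_add)
  finally have h: "(5/2)^2 * c^2 * l^2 / 4 \<le> exp (c * l)" by (simp add: power_mult_distrib field_simps)
  have "l^2 * exp (- c * l) = l^2 / exp (c*l)" by (simp add: exp_minus field_simps)
  also have "\<dots> \<le> 4 / ((5/2)^2 * c^2)"
  proof -
    have k: "0 < (5/2::real)^2 * c^2" using assms by simp
    have "l^2 * ((5/2)^2*c^2) \<le> 4 * exp(c*l)" using h by (simp add: algebra_simps)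
    thus ?thesis using k by (simp add: field_simps)
  qed
  finally show ?thesis .
qed



lemma ln3_ge1: "1 \<le> ln (3::real)"
proof -
  have "exp 1 \<le> (3::real)" using e_less_272 by linarith
  hence "ln (exp 1) \<le> ln (3::real)" by (subst ln_le_cancel_iff) auto
  thus ?thesis by simp
qed

lemma bad_term:
  fixes l a L D :: real
  assumes "0 \<le> a" "a \<le> 1/18" "a * L \<le> 1/18" "3 * L < l" "exp L = D" "L \<ge> 1"
  shows "exp (-l) * (l^2 + L^2) * exp (a * l + a * L) \<le> 4 / D"
proof -
  have l0: "l \<ge> 0" using assms by linarith
  have "l^2 + L^2 \<le> 2 * l^2" proof -
    have "L^2 \<le> l^2" using assms by (intro power_mono) auto
    thus ?thesis by simp
  qed
  have eB: "exp (-l) * exp (a * l + a * L) \<le> exp (1/18) * exp (-l/3) * exp (-(11/18) * l)"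
  proof -
    have "-l + (a*l + a*L) \<le> 1/18 + (-l/3) + (-(11/18)*l)"
      using assms l0 mult_right_mono[of a "1/18" l] by linarith
    hence "exp (-l + (a*l + a*L)) \<le> exp (1/18 + (-l/3) + (-(11/18)*l))" by (simp only: exp_le_cancel_iff)
    thus ?thesis by (simp only: exp_add)
  qed
  have e1: "exp (1/18::real) \<le> 343/324"
    using exp_bound[of "1/18::real"] by (simp add: power2_eq_square)
  have e2: "exp (-l/3) \<le> 1 / D"
  proof -
    have "exp (-l/3) \<le> exp (-L)" using assms by simp
    thus ?thesis using assms by (simp add: exp_minus inverse_eq_divide)
  qed
  have e3: "l^2 * exp (- (11/18) * l) \<le> 4 / ((5/2)^2 * (11/18)^2)"
    using sq_exp_bound[of "11/18" l] l0 by simp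
  have Dpos: "D > 0" using assms(5) by auto
  have "exp (-l) * (l^2 + L^2) * exp (a * l + a * L) = (l^2 + L^2) * (exp (-l) * exp (a * l + a * L))"
    by simp
  also have "\<dots> \<le> (2 * l^2) * (exp (1/18) * exp (-l/3) * exp (-(11/18) * l))"
    using \<open>l^2 + L^2 \<le> 2 * l^2\<close> by (rule mult_mono[OF _ eB]) auto
  also have "\<dots> = 2 * exp (1/18) * exp (-l/3) * (l^2 * exp (-(11/18) * l))" by simp
  also have "\<dots> \<le> 2 * (343/324) * (1/D) * (4 / ((5/2)^2 * (11/18)^2))"
    using e1 e2 e3 Dpos by (intro mult_mono) auto
  also have "\<dots> = (2 * (343/324) * (4 / ((5/2)^2 * (11/18)^2))) / D" by simp
  also have "\<dots> \<le> 4 / D" using Dpos by (intro divide_right_mono) (simp_all add: power2_eq_square)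
  finally show ?thesis .
qed



lemma mgf_nat:
  fixes p :: "'y::finite \<Rightarrow> real" and s \<Lambda> :: real
  assumes p0: "\<And>y. p y \<ge> 0" and p1: "sum p UNIV = 1"
    and Ldef: "\<Lambda> = ln (real (max CARD('y) 3))" and sL: "\<bar>s\<bar> * \<Lambda> \<le> 1/18"
  shows "(\<Sum>y\<in>UNIV. p y * exp (s * ((\<Sum>z\<in>UNIV. p z * (- ln (p z))) - (- ln (p y))))) \<le> 1 + 9 * s^2 * \<Lambda>^2"
proof -
  define l where "l = (\<lambda>y. - ln (p y))"
  define He where "He = (\<Sum>z\<in>UNIV. p z * l z)"
  define D where "D = real (max CARD('y) 3)"
  define N where "N = real CARD('y)"
  define a where "a = \<bar>s\<bar>"
  have Npos: "N > 0" unfolding N_def by simp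
  have ND: "N \<le> D" unfolding N_def D_def by simp
  have D3: "D \<ge> 3" unfolding D_def by simp
  have LD: "exp \<Lambda> = D" using Ldef D3 unfolding D_def by simp
  have L1: "\<Lambda> \<ge> 1"
  proof -
    have "ln 3 \<le> ln D" using D3 by simp
    thus ?thesis using ln3_ge1 Ldef unfolding D_def by linarith
  qed
  have a0: "a \<ge> 0" unfolding a_def by simp
  have aL: "a * \<Lambda> \<le> 1/18" using sL unfolding a_def .
  have a18: "a \<le> 1/18" using aL L1 a0 mult_left_mono[of 1 \<Lambda> a] by linarith
  have ple1: "p y \<le> 1" for y
    using member_le_sum[of y UNIV p] p0 p1 by simp
  have l0: "l y \<ge> 0" for y
  proof (cases "p y = 0")
    case True thus ?thesis unfolding l_def by simp
  next
    case False
    hence "p y > 0" using p0[of y] by simp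
    thus ?thesis using ple1[of y] unfolding l_def by simp
  qed
  have He0: "He \<ge> 0" unfolding He_def using p0 l0 by (intro sum_nonneg) simp
  have gibbs_t: "p y * (l y - ln N) \<le> 1/N - p y" for y
  proof (cases "p y = 0")
    case True thus ?thesis using Npos by simp
  next
    case False
    hence pp: "p y > 0" using p0[of y] by simp
    have "l y - ln N = ln (1 / (p y * N))" using pp Npos unfolding l_def by (simp add: ln_div ln_mult)
    also have "\<dots> \<le> 1 / (p y * N) - 1" using pp Npos by (intro ln_le_minus_one) simp
    finally have "p y * (l y - ln N) \<le> p y * (1 / (p y * N) - 1)" using pp by (intro mult_left_mono) auto
    also have "\<dots> = 1/N - p y" using pp Npos by (simp add: field_simps)
    finally show ?thesis .
  qed
  have "He - ln N = (\<Sum>y\<in>UNIV. p y * (l y - ln N))"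
    unfolding He_def using p1 by (simp add: right_diff_distrib sum_subtractf flip: sum_distrib_right)
  also have "\<dots> \<le> (\<Sum>y\<in>UNIV. 1/N - p y)" by (intro sum_mono gibbs_t)
  also have "\<dots> = 0" using p1 Npos unfolding N_def by (simp add: sum_subtractf)
  finally have "He \<le> ln N" by simp
  also have "ln N \<le> \<Lambda>" using ND Npos Ldef unfolding D_def by simp
  finally have HeL: "He \<le> \<Lambda>" .
  define v where "v = (\<lambda>y. s * (He - l y))"
  have sumv: "(\<Sum>y\<in>UNIV. p y * v y) = 0"
  proof -
    have "(\<Sum>y\<in>UNIV. p y * v y) = (\<Sum>y\<in>UNIV. (s * He) * p y - s * (p y * l y))"
      unfolding v_def by (intro sum.cong) (auto simp: algebra_simps)
    also have "\<dots> = (s * He) * (\<Sum>y\<in>UNIV. p y) - s * He"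
      unfolding He_def by (simp add: sum_subtractf sum_distrib_left)
    finally have "(\<Sum>y\<in>UNIV. p y * v y) = (s * He) * (\<Sum>y\<in>UNIV. p y) - s * He" .
    thus ?thesis using p1 by simp
  qed
  have tm: "p y * exp (v y) \<le> p y + p y * v y + s^2 / 2 * ((90/7) * \<Lambda>^2 * p y + 4 / D)" for y
  proof -
    define B where "B = a * l y + a * \<Lambda>"
    have B0: "B \<ge> 0" unfolding B_def using a0 l0[of y] L1 by simp
    have vB: "v y \<le> B"
    proof -
      have "v y \<le> \<bar>s * (He - l y)\<bar>" unfolding v_def by simp
      also have "\<dots> = a * \<bar>He - l y\<bar>" unfolding a_def by (simp add: abs_mult)
      also have "\<dots> \<le> a * (l y + \<Lambda>)" using a0 He0 HeL l0[of y] by (intro mult_left_mono) auto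
      finally show ?thesis unfolding B_def by (simp add: algebra_simps)
    qed
    have v2: "(v y)^2 \<le> s^2 * ((l y)^2 + \<Lambda>^2)"
    proof -
      have "(He - l y)^2 \<le> (l y)^2 + \<Lambda>^2"
      proof -
        have "(He - l y)^2 = \<bar>He - l y\<bar>^2" by simp
        also have "\<dots> \<le> (max He (l y))^2"
          using He0 l0[of y] by (intro power_mono) auto
        also have "\<dots> \<le> (l y)^2 + \<Lambda>^2"
        proof -
          have "He^2 \<le> \<Lambda>^2" using He0 HeL by (intro power_mono) auto
          hence A: "He^2 \<le> (l y)^2 + \<Lambda>^2" using zero_le_power2[of "l y"] by linarith
          have B: "(l y)^2 \<le> (l y)^2 + \<Lambda>^2" using zero_le_power2[of \<Lambda>] by linarith
          show ?thesis using A B by (simp add: max_def)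
        qed
        finally show ?thesis .
      qed
      thus ?thesis unfolding v_def by (simp add: power_mult_distrib mult_left_mono)
    qed
    have core: "p y * ((l y)^2 + \<Lambda>^2) * exp B \<le> (90/7) * \<Lambda>^2 * p y + 4 / D"
    proof (cases "l y \<le> 3 * \<Lambda>")
      case True
      have "B \<le> 2/9" unfolding B_def using True a0 aL mult_left_mono[OF True a0] by linarith
      hence "exp B \<le> exp (2/9)" by simp
      also have "exp (2/9::real) \<le> 9/7" using exp_bound[of "2/9::real"] by (simp add: power2_eq_square)
      finally have eB: "exp B \<le> 9/7" .
      have "(l y)^2 \<le> (3*\<Lambda>)^2" using True l0[of y] by (intro power_mono) auto
      hence ll: "(l y)^2 + \<Lambda>^2 \<le> 10 * \<Lambda>^2" by (simp add: power_mult_distrib)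
      have "p y * ((l y)^2 + \<Lambda>^2) * exp B \<le> p y * (10 * \<Lambda>^2) * (9/7)"
        using p0[of y] ll eB by (intro mult_mono) auto
      also have "\<dots> = (90/7) * \<Lambda>^2 * p y" by simp
      also have "\<dots> \<le> (90/7) * \<Lambda>^2 * p y + 4 / D" using D3 by simp
      finally show ?thesis .
    next
      case False
      hence "l y > 0" using L1 by linarith
      hence pp: "p y > 0" using p0[of y] unfolding l_def by (cases "p y = 0") auto
      hence pe: "p y = exp (- l y)" unfolding l_def by simp
      have "p y * ((l y)^2 + \<Lambda>^2) * exp B \<le> 4 / D"
        unfolding pe B_def using bad_term[of a \<Lambda> "l y" D] a0 a18 aL False LD L1 by simp
      also have "\<dots> \<le> (90/7) * \<Lambda>^2 * p y + 4 / D" using pp by simp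
      finally show ?thesis .
    qed
    have "p y * exp (v y) \<le> p y * (1 + v y + (v y)^2 / 2 * exp B)"
      using p0[of y] exp_quad_bound[OF B0 vB] by (intro mult_left_mono) auto
    also have "\<dots> = p y + p y * v y + (p y * (v y)^2 * exp B) / 2" by (simp add: algebra_simps)
    also have "p y * (v y)^2 * exp B \<le> p y * (s^2 * ((l y)^2 + \<Lambda>^2)) * exp B"
      using p0[of y] v2 by (intro mult_right_mono mult_left_mono) auto
    also have "\<dots> = s^2 * (p y * ((l y)^2 + \<Lambda>^2) * exp B)" by simp
    also have "\<dots> \<le> s^2 * ((90/7) * \<Lambda>^2 * p y + 4 / D)" using core by (intro mult_left_mono) auto
    finally show ?thesis by simp
  qed
  have pL: "(\<Sum>n\<in>UNIV. p n * \<Lambda>^2) = \<Lambda>^2" using p1 by (simp flip: sum_distrib_right)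
  have "(\<Sum>y\<in>UNIV. p y * exp (v y)) \<le> (\<Sum>y\<in>UNIV. p y + p y * v y + s^2 / 2 * ((90/7) * \<Lambda>^2 * p y + 4 / D))"
    by (intro sum_mono tm)
  also have "\<dots> = 1 + 0 + s^2/2 * ((90/7) * \<Lambda>^2 + N * (4 / D))"
    using p1 sumv pL unfolding N_def by (simp add: sum.distrib sum_distrib_left sum_distrib_right flip: sum_distrib_left)
  also have "\<dots> \<le> 1 + 9 * s^2 * \<Lambda>^2"
  proof -
    have "N * (4 / D) \<le> 4" using ND Npos D3 by (simp add: field_simps)
    also have "4 \<le> 4 * \<Lambda>^2" using L1 by (simp add: one_le_power)
    finally have "(90/7) * \<Lambda>^2 + N * (4 / D) \<le> 18 * \<Lambda>^2" using zero_le_power2[of \<Lambda>] by linarith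
    hence "s^2/2 * ((90/7) * \<Lambda>^2 + N * (4 / D)) \<le> s^2/2 * (18 * \<Lambda>^2)" by (intro mult_left_mono) auto
    thus ?thesis by (simp add: mult.commute)
  qed
  finally show ?thesis unfolding v_def He_def l_def .
qed



lemma mgf1:
  fixes p :: "'y::finite \<Rightarrow> real" and r :: real
  assumes p0: "\<And>y. p y \<ge> 0" and p1: "sum p UNIV = 1"
    and rL: "\<bar>r\<bar> * log 2 (real (max CARD('y) 3)) \<le> 1/18"
  shows "(\<Sum>y\<in>UNIV. p y powr (1 + r))
     \<le> 2 powr (- r * shannon_H UNIV p + 9 * r^2 * (log 2 (real (max CARD('y) 3)))^2)"
proof -
  define L where "L = log 2 (real (max CARD('y) 3))"
  define \<Lambda> where "\<Lambda> = ln (real (max CARD('y) 3))"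
  define l where "l = (\<lambda>y. - ln (p y))"
  define He where "He = (\<Sum>z\<in>UNIV. p z * l z)"
  have ln2: "0 < ln (2::real)" "ln (2::real) < 1" using ln_2_less_1 by auto
  have LL: "\<Lambda> = L * ln 2" unfolding L_def \<Lambda>_def log_def by simp
  have L0: "\<Lambda> \<ge> 0" unfolding \<Lambda>_def by simp
  have "\<bar>r\<bar> * \<Lambda> \<le> \<bar>r\<bar> * L"
  proof -
    have "L \<ge> 0" unfolding L_def by simp
    hence "L * ln 2 \<le> L * 1" using ln2 by (intro mult_left_mono) auto
    thus ?thesis using LL by (intro mult_left_mono) auto
  qed
  hence rL': "\<bar>r\<bar> * \<Lambda> \<le> 1/18" using rL unfolding L_def by linarith
  have M: "(\<Sum>y\<in>UNIV. p y * exp (r * (He - l y))) \<le> 1 + 9 * r^2 * \<Lambda>^2"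
    using mgf_nat[OF p0 p1 \<Lambda>_def rL'] unfolding He_def l_def .
  have pw: "p y powr (1 + r) = exp (- r * He) * (p y * exp (r * (He - l y)))" for y
  proof (cases "p y = 0")
    case True thus ?thesis by simp
  next
    case False
    hence pp: "p y > 0" using p0[of y] by simp
    have "p y powr (1 + r) = exp ((1 + r) * ln (p y))" using pp by (simp add: powr_def)
    also have "\<dots> = exp (ln (p y)) * exp (- r * He) * exp (r * (He - l y))"
      unfolding l_def by (simp add: algebra_simps flip: exp_add)
    also have "\<dots> = exp (- r * He) * (p y * exp (r * (He - l y)))" using pp by simp
    finally show ?thesis .
  qed
  have "(\<Sum>y\<in>UNIV. p y powr (1 + r)) = exp (- r * He) * (\<Sum>y\<in>UNIV. p y * exp (r * (He - l y)))"
    by (simp add: pw sum_distrib_left)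
  also have "\<dots> \<le> exp (- r * He) * (1 + 9 * r^2 * \<Lambda>^2)"
    using M by (intro mult_left_mono) auto
  also have "\<dots> \<le> exp (- r * He) * exp (9 * r^2 * \<Lambda>^2)"
    by (intro mult_left_mono) auto
  also have "\<dots> = exp (- r * He + 9 * r^2 * \<Lambda>^2)" by (simp only: exp_add)
  also have "\<dots> \<le> exp (- r * He + 9 * r^2 * \<Lambda>^2 / ln 2)"
  proof -
    have "9 * r^2 * \<Lambda>^2 \<le> 9 * r^2 * \<Lambda>^2 / ln 2"
    proof -
      have "9 * r^2 * \<Lambda>^2 * ln 2 \<le> 9 * r^2 * \<Lambda>^2 * 1" using ln2 by (intro mult_left_mono) auto
      thus ?thesis using ln2 by (simp add: le_divide_eq)
    qed
    thus ?thesis by simp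
  qed
  also have "\<dots> = 2 powr (- r * shannon_H UNIV p + 9 * r^2 * L^2)"
  proof -
    have SH: "shannon_H UNIV p = He / ln 2"
      unfolding shannon_H_def He_def l_def log_def
      by (simp add: sum_divide_distrib sum_negf flip: sum_distrib_left) (intro sum.cong, auto)
    show ?thesis unfolding powr_def SH LL using ln2
      by (simp add: field_simps power2_eq_square)
  qed
  finally show ?thesis unfolding L_def .
qed



lemma finite_blocks: "finite (blocks n :: ('y::finite) list set)"
proof -
  have "blocks n = {xs :: 'y list. set xs \<subseteq> UNIV \<and> length xs = n}" unfolding blocks_def by simp
  thus ?thesis using finite_lists_length_eq[of "UNIV :: 'y set" n] by simp
qed

lemma blocks_Suc: "blocks (Suc n) = (\<lambda>(y, ys). y # ys) ` (UNIV \<times> blocks n)"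
proof (intro equalityI subsetI)
  fix zs assume "zs \<in> blocks (Suc n)"
  then obtain y ys where "zs = y # ys" "length ys = n" unfolding blocks_def by (cases zs) auto
  thus "zs \<in> (\<lambda>(y, ys). y # ys) ` (UNIV \<times> blocks n)" unfolding blocks_def by force
qed (auto simp: blocks_def)

lemma tensor:
  fixes f :: "nat \<Rightarrow> 'y::finite \<Rightarrow> real"
  shows "(\<Sum>ys\<in>blocks n. \<Prod>i<n. f i (ys ! i)) = (\<Prod>i<n. \<Sum>y\<in>UNIV. f i y)"
proof (induction n arbitrary: f)
  case 0
  have "blocks 0 = {[] :: 'y list}" unfolding blocks_def by auto
  thus ?case by simp
next
  case (Suc n)
  have inj: "inj_on (\<lambda>(y, ys). y # ys) (UNIV \<times> blocks n :: ('y \<times> 'y list) set)"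
    by (auto simp: inj_on_def)
  have "(\<Sum>ys\<in>blocks (Suc n). \<Prod>i<Suc n. f i (ys ! i))
      = (\<Sum>(y, ys)\<in>UNIV \<times> blocks n. \<Prod>i<Suc n. f i ((y # ys) ! i))"
    unfolding blocks_Suc by (subst sum.reindex[OF inj]) (simp add: case_prod_beta)
  also have "\<dots> = (\<Sum>(y, ys)\<in>UNIV \<times> blocks n. f 0 y * (\<Prod>i<n. f (Suc i) (ys ! i)))"
    by (intro sum.cong refl) (simp only: split_beta prod.lessThan_Suc_shift nth_Cons_0 nth_Cons_Suc)
  also have "\<dots> = (\<Sum>y\<in>UNIV. \<Sum>ys\<in>blocks n. f 0 y * (\<Prod>i<n. f (Suc i) (ys ! i)))"
    by (subst sum.cartesian_product[symmetric]) simp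
  also have "\<dots> = (\<Sum>y\<in>UNIV. f 0 y * (\<Prod>i<n. \<Sum>z\<in>UNIV. f (Suc i) z))"
    using Suc.IH[where f="\<lambda>i. f (Suc i)"] by (simp flip: sum_distrib_left)
  also have "\<dots> = (\<Sum>y\<in>UNIV. f 0 y) * (\<Prod>i<n. \<Sum>z\<in>UNIV. f (Suc i) z)"
    by (simp add: sum_distrib_right)
  also have "\<dots> = (\<Prod>i<Suc n. \<Sum>y\<in>UNIV. f i y)"
    by (simp only: prod.lessThan_Suc_shift)
  finally show ?case .
qed

lemma marginal:
  fixes f :: "nat \<Rightarrow> 'y::finite \<Rightarrow> real" and g :: "'y \<Rightarrow> real"
  assumes "i < n" and f1: "\<And>j. (\<Sum>y\<in>UNIV. f j y) = 1"
  shows "(\<Sum>ys\<in>blocks n. (\<Prod>j<n. f j (ys ! j)) * g (ys ! i)) = (\<Sum>y\<in>UNIV. f i y * g y)"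
proof -
  define h where "h = (\<lambda>j y. if j = i then f j y * g y else f j y)"
  have "(\<Prod>j<n. h j (ys ! j)) = (\<Prod>j<n. f j (ys ! j)) * g (ys ! i)" for ys
  proof -
    have "(\<Prod>j<n. h j (ys ! j)) = h i (ys ! i) * (\<Prod>j\<in>{..<n} - {i}. h j (ys ! j))"
      using assms(1) by (subst prod.remove[of _ i]) auto
    also have "(\<Prod>j\<in>{..<n} - {i}. h j (ys ! j)) = (\<Prod>j\<in>{..<n} - {i}. f j (ys ! j))"
      unfolding h_def by (intro prod.cong) auto
    also have "(\<Prod>j<n. f j (ys ! j)) = f i (ys ! i) * (\<Prod>j\<in>{..<n} - {i}. f j (ys ! j))"
      using assms(1) by (subst prod.remove[of _ i]) auto
    ultimately show ?thesis unfolding h_def by simp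
  qed
  hence "(\<Sum>ys\<in>blocks n. (\<Prod>j<n. f j (ys ! j)) * g (ys ! i)) = (\<Prod>j<n. \<Sum>y\<in>UNIV. h j y)"
    using tensor[where f=h and n=n] by simp
  also have "\<dots> = (\<Sum>y\<in>UNIV. h i y) * (\<Prod>j\<in>{..<n} - {i}. \<Sum>y\<in>UNIV. h j y)"
    using assms(1) by (subst prod.remove[of _ i]) auto
  also have "(\<Prod>j\<in>{..<n} - {i}. \<Sum>y\<in>UNIV. h j y) = 1"
    unfolding h_def using f1 by (intro prod.neutral) auto
  finally show ?thesis unfolding h_def by simp
qed



lemma pmf_sum1: "(\<Sum>y\<in>UNIV. pmf (q :: ('y::finite) pmf) y) = 1"
  by (rule sum_pmf_eq_1) auto

lemma prod_chan_eq: "prod_chan W xs ys = (\<Prod>i<length xs. pmf (W (xs ! i)) (ys ! i))"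
  by (simp add: prod_chan_def)

lemma total1:
  fixes W :: "'x \<Rightarrow> ('y::finite) pmf"
  shows "(\<Sum>ys\<in>blocks (length xs). prod_chan W xs ys) = 1"
  unfolding prod_chan_def using tensor[where f="\<lambda>i. pmf (W (xs ! i))" and n="length xs"]
  by (simp add: pmf_sum1)

lemma H_add:
  fixes W :: "'x \<Rightarrow> ('y::finite) pmf"
  shows "H_chan W xs = (\<Sum>i<length xs. shannon_H UNIV (pmf (W (xs ! i))))"
proof -
  define n where "n = length xs"
  define p where "p = (\<lambda>i. pmf (W (xs ! i)))"
  define g where "g = (\<lambda>i y. ln (p i y) / ln 2)"
  have P: "prod_chan W xs ys = (\<Prod>i<n. p i (ys ! i))" for ys
    unfolding prod_chan_def n_def p_def by simp
  have pt: "(if prod_chan W xs ys = 0 then 0 else prod_chan W xs ys * log 2 (prod_chan W xs ys))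
      = (\<Sum>i<n. (\<Prod>j<n. p j (ys ! j)) * g i (ys ! i))" for ys
  proof (cases "prod_chan W xs ys = 0")
    case True
    hence z: "(\<Prod>j<n. p j (ys ! j)) = 0" unfolding P .
    show ?thesis unfolding P z by simp
  next
    case False
    hence nz: "\<And>i. i \<in> {..<n} \<Longrightarrow> p i (ys ! i) \<noteq> 0" unfolding P by auto
    have "log 2 (\<Prod>j<n. p j (ys ! j)) = (\<Sum>i<n. g i (ys ! i))"
      unfolding log_def g_def using ln_prod[of "{..<n}" "\<lambda>j. p j (ys ! j)", OF _ nz]
      by (simp add: sum_divide_distrib)
    thus ?thesis using False unfolding P by (simp add: sum_distrib_left)
  qed
  have "H_chan W xs = - (\<Sum>ys\<in>blocks n. \<Sum>i<n. (\<Prod>j<n. p j (ys ! j)) * g i (ys ! i))"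
    unfolding H_chan_def shannon_H_def n_def[symmetric] using pt by simp
  also have "\<dots> = - (\<Sum>i<n. \<Sum>ys\<in>blocks n. (\<Prod>j<n. p j (ys ! j)) * g i (ys ! i))"
    by (subst sum.swap) simp
  also have "\<dots> = - (\<Sum>i<n. \<Sum>y\<in>UNIV. p i y * g i y)"
    using marginal[where f=p] unfolding p_def by (simp add: pmf_sum1)
  also have "\<dots> = (\<Sum>i<n. shannon_H UNIV (p i))"
    unfolding shannon_H_def g_def log_def by (simp add: sum_negf) (intro sum.cong refl, auto)
  finally show ?thesis unfolding n_def p_def .
qed



lemma mgf_block:
  fixes W :: "'x \<Rightarrow> ('y::finite) pmf" and r :: real
  assumes rL: "\<bar>r\<bar> * log 2 (real (max CARD('y) 3)) \<le> 1/18"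
  shows "(\<Sum>ys\<in>blocks (length xs). prod_chan W xs ys * 2 powr (r * (log 2 (prod_chan W xs ys) + H_chan W xs)))
     \<le> 2 powr (9 * real (length xs) * r^2 * (log 2 (real (max CARD('y) 3)))^2)"
proof -
  define n where "n = length xs"
  define L where "L = log 2 (real (max CARD('y) 3))"
  define p where "p = (\<lambda>i. pmf (W (xs ! i)))"
  define H where "H = H_chan W xs"
  define Hi where "Hi = (\<lambda>i. shannon_H UNIV (p i))"
  have HH: "H = (\<Sum>i<n. Hi i)" unfolding H_def Hi_def n_def p_def by (rule H_add)
  have P: "prod_chan W xs ys = (\<Prod>i<n. p i (ys ! i))" for ys
    unfolding prod_chan_def n_def p_def by simp
  have P0: "prod_chan W xs ys \<ge> 0" for ys unfolding P p_def by (intro prod_nonneg) auto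
  have te: "prod_chan W xs ys * 2 powr (r * (log 2 (prod_chan W xs ys) + H))
      = 2 powr (r * H) * (prod_chan W xs ys) powr (1 + r)" for ys
  proof (cases "prod_chan W xs ys = 0")
    case True thus ?thesis by simp
  next
    case False
    define Q where "Q = prod_chan W xs ys"
    have Qp: "Q > 0" using False P0[of ys] unfolding Q_def by simp
    have "Q * 2 powr (r * (log 2 Q + H)) = Q * (2 powr (log 2 Q * r) * 2 powr (r * H))"
      by (simp add: algebra_simps powr_add)
    also have "2 powr (log 2 Q * r) = Q powr r" using Qp by (simp add: powr_powr[symmetric])
    also have "Q * (Q powr r * 2 powr (r * H)) = 2 powr (r * H) * (Q powr 1 * Q powr r)" using Qp by simp
    also have "Q powr 1 * Q powr r = Q powr (1 + r)" by (simp add: powr_add)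
    finally show ?thesis unfolding Q_def .
  qed
  have "(\<Sum>ys\<in>blocks n. prod_chan W xs ys * 2 powr (r * (log 2 (prod_chan W xs ys) + H)))
      = 2 powr (r * H) * (\<Sum>ys\<in>blocks n. (prod_chan W xs ys) powr (1 + r))"
    by (simp add: te sum_distrib_left)
  also have "(\<Sum>ys\<in>blocks n. (prod_chan W xs ys) powr (1 + r)) = (\<Prod>i<n. \<Sum>y\<in>UNIV. p i y powr (1 + r))"
    unfolding P prod_powr_distrib by (rule tensor)
  also have "(\<Prod>i<n. \<Sum>y\<in>UNIV. p i y powr (1 + r)) \<le> (\<Prod>i<n. 2 powr (- r * Hi i + 9 * r^2 * L^2))"
  proof (intro prod_mono conjI)
    fix i
    show "0 \<le> (\<Sum>y\<in>UNIV. p i y powr (1 + r))" by (intro sum_nonneg) auto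
    show "(\<Sum>y\<in>UNIV. p i y powr (1 + r)) \<le> 2 powr (- r * Hi i + 9 * r^2 * L^2)"
      unfolding Hi_def L_def using mgf1[of "p i" r] rL unfolding p_def by (simp add: pmf_sum1)
  qed
  also have "(\<Prod>i<n. 2 powr (- r * Hi i + 9 * r^2 * L^2)) = 2 powr (\<Sum>i<n. - r * Hi i + 9 * r^2 * L^2)"
    by (simp add: powr_sum)
  also have "2 powr (r * H) * 2 powr (\<Sum>i<n. - r * Hi i + 9 * r^2 * L^2)
      = 2 powr (r * H + (\<Sum>i<n. - r * Hi i + 9 * r^2 * L^2))" by (simp add: powr_add)
  also have "r * H + (\<Sum>i<n. - r * Hi i + 9 * r^2 * L^2) = 9 * real n * r^2 * L^2"
    unfolding HH by (simp add: sum.distrib sum_distrib_left sum_subtractf)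
  finally show ?thesis unfolding n_def L_def H_def by simp
qed



theorem lemma1:
  fixes W :: "'x \<Rightarrow> ('y::finite) pmf" and xs :: "'x list" and n :: nat and \<delta> :: real
  assumes "length xs = n"
    and "0 < \<delta>"
    and "\<delta> \<le> sqrt (real n) * log 2 (real CARD('y))"
  shows "(\<Sum>ys\<in>typical_set W xs \<delta>. prod_chan W xs ys)
           \<ge> 1 - 2 * 2 powr (- (\<delta>^2) / (36 * Kfun CARD('y)))"
proof -
  define L where "L = log 2 (real (max CARD('y) 3))"
  define P where "P = prod_chan W xs"
  define H where "H = H_chan W xs"
  define B where "B = (blocks n :: 'y list set)"
  define T where "T = typical_set W xs \<delta>"
  define t where "t = \<delta> * sqrt (real n)"
  define X where "X = (\<lambda>ys. log 2 (P ys) + H)"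
  have K: "Kfun CARD('y) = L^2" unfolding Kfun_def L_def ..
  have L0: "L > 0" unfolding L_def by simp
  have dL: "log 2 (real CARD('y)) \<le> L" unfolding L_def by simp
  have d0: "log 2 (real CARD('y)) \<ge> 0" by simp
  have sn: "sqrt (real n) > 0"
  proof (rule ccontr)
    assume "\<not> sqrt (real n) > 0"
    hence "sqrt (real n) = 0" by (metis real_sqrt_ge_zero not_less order.antisym real_sqrt_ge_zero of_nat_0_le_iff)
    thus False using assms(2,3) by simp
  qed
  define s where "s = \<delta> / (18 * L^2 * sqrt (real n))"
  have s0: "s > 0" unfolding s_def using assms(2) L0 sn by simp
  have sL: "\<bar>s\<bar> * L \<le> 1/18"
  proof -
    have "\<bar>s\<bar> * L = \<delta> / (18 * L * sqrt (real n))" using s0 L0 assms(2) unfolding s_def by (simp add: power2_eq_square mult.assoc)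
    also have "\<dots> \<le> (sqrt (real n) * L) / (18 * L * sqrt (real n))"
      using assms(3) dL sn L0 by (intro divide_right_mono) (auto intro: order.trans mult_left_mono)
    also have "\<dots> = 1/18" using sn L0 by simp
    finally show ?thesis .
  qed
  have sL': "\<bar>- s\<bar> * L \<le> 1/18" using sL by simp
  have finB: "finite B" unfolding B_def by (rule finite_blocks)
  have TB: "T \<subseteq> B" unfolding T_def B_def typical_set_def assms(1) by auto
  have P0: "P ys \<ge> 0" for ys unfolding P_def prod_chan_def by (intro prod_nonneg) auto
  have tot: "(\<Sum>ys\<in>B. P ys) = 1" unfolding B_def P_def using total1[of W xs] assms(1) by simp
  have Tdef: "T = {ys \<in> B. P ys > 0 \<and> \<bar>X ys\<bar> \<le> t}"
    unfolding T_def typical_set_def B_def P_def X_def H_def t_def assms(1) ..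
  have ind: "(if ys \<in> T then 0 else P ys)
      \<le> 2 powr (- s * t) * (P ys * 2 powr (s * X ys) + P ys * 2 powr ((- s) * X ys))" if "ys \<in> B" for ys
  proof (cases "ys \<in> T \<or> P ys = 0")
    case True
    have "0 \<le> 2 powr (- s * t) * (P ys * 2 powr (s * X ys) + P ys * 2 powr ((- s) * X ys))"
      using P0[of ys] by simp
    thus ?thesis using True by auto
  next
    case False
    hence Pp: "P ys > 0" and Xt: "\<bar>X ys\<bar> > t" using P0[of ys] that unfolding Tdef by auto
    have e: "2 powr (- s * t) * (P ys * 2 powr (c * X ys)) = P ys * 2 powr (c * X ys - s * t)" for c
    proof -
      have "2 powr (c * X ys - s * t) = 2 powr (c * X ys) * 2 powr (- s * t)"
        by (simp add: powr_add[symmetric])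
      thus ?thesis by simp
    qed
    have eq: "2 powr (- s * t) * (P ys * 2 powr (s * X ys) + P ys * 2 powr ((- s) * X ys))
       = P ys * 2 powr (s * X ys - s * t) + P ys * 2 powr ((- s) * X ys - s * t)"
      by (simp only: distrib_left e)
    have nT: "ys \<notin> T" using False by simp
    show ?thesis
    proof (cases "X ys > t")
      case True
      have "0 \<le> s * X ys - s * t" using s0 True by (simp add: right_diff_distrib[symmetric])
      hence "1 \<le> 2 powr (s * X ys - s * t)" by (intro ge_one_powr_ge_zero) auto
      hence "P ys \<le> P ys * 2 powr (s * X ys - s * t)" using Pp by simp
      moreover have "0 \<le> P ys * 2 powr ((- s) * X ys - s * t)" using Pp by simp
      ultimately show ?thesis unfolding eq using nT by simp
    next
      case False
      hence "X ys < - t" using Xt by linarith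
      hence "0 \<le> s * (- X ys - t)" using s0 by (intro mult_nonneg_nonneg) auto
      hence "0 \<le> (- s) * X ys - s * t" by (simp add: algebra_simps)
      hence "1 \<le> 2 powr ((- s) * X ys - s * t)" by (intro ge_one_powr_ge_zero) auto
      hence "P ys \<le> P ys * 2 powr ((- s) * X ys - s * t)" using Pp by simp
      moreover have "0 \<le> P ys * 2 powr (s * X ys - s * t)" using Pp by simp
      ultimately show ?thesis unfolding eq using nT by simp
    qed
  qed
  have M1: "(\<Sum>ys\<in>B. P ys * 2 powr (c * X ys)) \<le> 2 powr (9 * real n * c^2 * L^2)"
    if "\<bar>c\<bar> * L \<le> 1/18" for c
    using mgf_block[of c W xs] that assms(1) unfolding B_def P_def X_def H_def L_def by simp
  have "1 - (\<Sum>ys\<in>T. P ys) = (\<Sum>ys\<in>B. P ys) - (\<Sum>ys\<in>T. P ys)" using tot by simp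
  also have "\<dots> = (\<Sum>ys\<in>B. if ys \<in> T then 0 else P ys)"
  proof -
    have "(\<Sum>ys\<in>B. P ys) = (\<Sum>ys\<in>B. (if ys \<in> T then P ys else 0) + (if ys \<in> T then 0 else P ys))"
      by (intro sum.cong) auto
    also have "\<dots> = (\<Sum>ys\<in>T. P ys) + (\<Sum>ys\<in>B. if ys \<in> T then 0 else P ys)"
      using TB finB by (simp add: sum.distrib sum.If_cases Int_absorb1)
    finally show ?thesis by simp
  qed
  also have "\<dots> \<le> (\<Sum>ys\<in>B. 2 powr (- s * t) * (P ys * 2 powr (s * X ys) + P ys * 2 powr ((- s) * X ys)))"
    using ind by (intro sum_mono) auto
  also have "\<dots> = 2 powr (- s * t) * ((\<Sum>ys\<in>B. P ys * 2 powr (s * X ys)) + (\<Sum>ys\<in>B. P ys * 2 powr ((- s) * X ys)))"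
    by (simp only: sum_distrib_left[symmetric] sum.distrib)
  also have "\<dots> \<le> 2 powr (- s * t) * (2 powr (9 * real n * s^2 * L^2) + 2 powr (9 * real n * (-s)^2 * L^2))"
    using M1[OF sL] M1[OF sL'] by (intro mult_left_mono add_mono) auto
  also have "\<dots> = 2 * 2 powr (- s * t + 9 * real n * s^2 * L^2)"
    by (simp only: powr_add power2_minus) simp
  also have "- s * t + 9 * real n * s^2 * L^2 = - (\<delta>^2) / (36 * L^2)"
  proof -
    have nn: "real n = sqrt (real n) ^ 2" by simp
    show ?thesis unfolding s_def t_def using sn L0
      by (subst nn) (simp add: field_simps power2_eq_square)
  qed
  finally show ?thesis unfolding K T_def P_def by simp
qed

end
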